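(* Let $S$ be a semigroup, $T$ an ideal of $S$ and $U=S/T$ the Rees quotient. Let $\langle A\mid R\rangle$ be a finite complete semigroup presentation of $T$ and $\langle B\mid Q\rangle$ a finite complete semigroup presentation of $U$, where $A\cap B=\emptyset$. Let $B_0\subseteq B$ be the set of letters representing the zero of $U$, and $Q_0\subseteq Q$ the set of rules $(u,v)$ for which $u$ (equivalently $v$) represents the zero of $U$; assume $B_0$ contains a letter $0$ which is the unique $Q$-irreducible word representing the zero of $U$. Words over $A\cup (B\setminus B_0)$ represent elements of $S$ in the natural way (letters of $A$ represent elements of $T$ via the given presentation; letters of $B\setminus B_0$ represent the corresponding nonzero elements of $U$, identified with elements of $S\setminus T$). For each $u\in(B\setminus B_0)^+$ representing the zero of $U$ fix $\rho(u)\in A^+$ with $u=\rho(u)$ in $S$, and for $a\in A$, $b\in B\setminus B_0$ fix $\sigma(a,b),\pi(b,a)\in A^+$ with $ab=\sigma(a,b)$ and $ba=\pi(b,a)$ in $S$. Let $V$ be the rewriting system on $A\cup(B\setminus B_0)$ consisting of $R$, $Q\setminus Q_0$, and the rules $u\to\rho(u)$ (for $u\in(B\setminus B_0)^+$ such that $(u,v)\in Q_0$ or $(v,u)\in Q_0$ for some $v$), $ab\to\sigma(a,b)$ and $ba\to\pi(b,a)$ ($a\in A$, $b\in B\setminus B_0$). Then for every word $w\in(A\cup B\setminus B_0)^+$: (i) if $w$ represents an element of $T$, then there is $w'\in A^+$ with $w\to_V^* w'$; (ii) otherwise $w\in(B\setminus B_0)^+$.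
   Context: For a rewriting system $V$, $\to_V$ denotes one-step reduction ($w_1uw_2\to_V w_1vw_2$ for a rule $u\to v$ in $V$) and $\to_V^*$ its reflexive transitive closure. A rewriting system is complete if it is noetherian (no infinite reduction chains) and confluent. The Rees quotient $S/T$ identifies all elements of $T$ to a single zero. *)

theory Defs
  imports Main
begin

definition wplus :: "'l set \<Rightarrow> 'l list set" where
  "wplus X = lists X - {[]}"

definition rstep :: "('l list \<times> 'l list) set \<Rightarrow> ('l list \<times> 'l list) set" where
  "rstep V = {(w1 @ u @ w2, w1 @ v @ w2) | w1 u v w2. (u, v) \<in> V}"

definition rconv :: "('l list \<times> 'l list) set \<Rightarrow> ('l list \<times> 'l list) set" where
  "rconv V = (rstep V \<union> (rstep V)\<inverse>)\<^sup>*"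

definition noetherian_on :: "'l set \<Rightarrow> ('l list \<times> 'l list) set \<Rightarrow> bool" where
  "noetherian_on X V \<longleftrightarrow>
     \<not> (\<exists>f :: nat \<Rightarrow> 'l list. f 0 \<in> lists X \<and> (\<forall>i. (f i, f (Suc i)) \<in> rstep V))"

definition confluent_on :: "'l set \<Rightarrow> ('l list \<times> 'l list) set \<Rightarrow> bool" where
  "confluent_on X V \<longleftrightarrow>
     (\<forall>w \<in> lists X. \<forall>x y. (w, x) \<in> (rstep V)\<^sup>* \<and> (w, y) \<in> (rstep V)\<^sup>* \<longrightarrow>
        (\<exists>z. (x, z) \<in> (rstep V)\<^sup>* \<and> (y, z) \<in> (rstep V)\<^sup>*))"

definition complete_on :: "'l set \<Rightarrow> ('l list \<times> 'l list) set \<Rightarrow> bool" where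
  "complete_on X V \<longleftrightarrow> noetherian_on X V \<and> confluent_on X V"

definition irreducible_word :: "('l list \<times> 'l list) set \<Rightarrow> 'l list \<Rightarrow> bool" where
  "irreducible_word V w \<longleftrightarrow> \<not> (\<exists>w'. (w, w') \<in> rstep V)"

fun weval :: "('b \<Rightarrow> 'b \<Rightarrow> 'b) \<Rightarrow> ('l \<Rightarrow> 'b) \<Rightarrow> 'l list \<Rightarrow> 'b" where
  "weval m f [] = undefined"
| "weval m f (x # xs) = foldl (\<lambda>acc l. m acc (f l)) (f x) xs"

definition is_presentation ::
  "('b \<Rightarrow> 'b \<Rightarrow> 'b) \<Rightarrow> 'b set \<Rightarrow> ('l \<Rightarrow> 'b) \<Rightarrow> 'l set \<Rightarrow> ('l list \<times> 'l list) set \<Rightarrow> bool" where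
  "is_presentation m X f A R \<longleftrightarrow>
     R \<subseteq> wplus A \<times> wplus A \<and>
     weval m f ` wplus A = X \<and>
     (\<forall>u \<in> wplus A. \<forall>v \<in> wplus A. weval m f u = weval m f v \<longleftrightarrow> (u, v) \<in> rconv R)"

definition finite_complete_presentation ::
  "('b \<Rightarrow> 'b \<Rightarrow> 'b) \<Rightarrow> 'b set \<Rightarrow> ('l \<Rightarrow> 'b) \<Rightarrow> 'l set \<Rightarrow> ('l list \<times> 'l list) set \<Rightarrow> bool" where
  "finite_complete_presentation m X f A R \<longleftrightarrow>
     finite A \<and> finite R \<and> is_presentation m X f A R \<and> complete_on A R"

text \<open>The semigroup S is the whole type 'a.\<close>
definition semigroup_ideal :: "'a::semigroup_mult set \<Rightarrow> bool" where
  "semigroup_ideal T \<longleftrightarrow> T \<noteq> {} \<and> (\<forall>s t. t \<in> T \<longrightarrow> s * t \<in> T \<and> t * s \<in> T)"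

text \<open>Rees quotient S/T: elements Some s (s not in T) and None (the zero, i.e. the class T).\<close>
definition rees_carrier :: "'a set \<Rightarrow> 'a option set" where
  "rees_carrier T = insert None (Some ` (- T))"

definition rees_mult :: "'a::semigroup_mult set \<Rightarrow> 'a option \<Rightarrow> 'a option \<Rightarrow> 'a option" where
  "rees_mult T x y = (case (x, y) of
      (Some a, Some b) \<Rightarrow> (if a * b \<in> T then None else Some (a * b))
    | _ \<Rightarrow> None)"

end

theory Submission
  imports Defs
begin

lemma weval_snoc: "xs \<noteq> [] \<Longrightarrow> weval m f (xs @ [x]) = m (weval m f xs) (f x)"
  by (cases xs) auto

lemma weval_single[simp]: "weval m f [x] = f x" by simp

lemma ideal_mem:
  assumes "semigroup_ideal T" "x \<in> set w" "f x \<in> (T::'a::semigroup_mult set)"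
  shows "weval (*) f w \<in> T"
  using assms(2)
proof (induction w rule: rev_induct)
  case Nil then show ?case by simp
next
  case (snoc y w)
  show ?case
  proof (cases "w = []")
    case True then show ?thesis using snoc assms by auto
  next
    case False
    then have e: "weval (*) f (w @ [y]) = weval (*) f w * f y" by (rule weval_snoc)
    show ?thesis
    proof (cases "x \<in> set w")
      case True then show ?thesis using snoc assms(1) e unfolding semigroup_ideal_def by auto
    next
      case False then have "x = y" using snoc by auto
      then show ?thesis using assms e unfolding semigroup_ideal_def by auto
    qed
  qed
qed

lemma adjacent:
  assumes "set w \<inter> A \<noteq> {}" "\<not> set w \<subseteq> A"
  shows "\<exists>xs a b ys. w = xs @ [a,b] @ ys \<and> ((a \<in> A \<and> b \<notin> A) \<or> (a \<notin> A \<and> b \<in> A))"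
  using assms
proof (induction w)
  case Nil then show ?case by simp
next
  case (Cons x w)
  show ?case
  proof (cases w)
    case Nil then show ?thesis using Cons by auto
  next
    case (Cons y w'')
    show ?thesis
    proof (cases "(x \<in> A \<and> y \<notin> A) \<or> (x \<notin> A \<and> y \<in> A)")
      case True then show ?thesis using Cons by (metis append_Cons append_Nil)
    next
      case False
      then have "set w \<inter> A \<noteq> {}" "\<not> set w \<subseteq> A" using Cons.prems Cons by auto
      then obtain xs a b ys where "w = xs @ [a,b] @ ys" "((a \<in> A \<and> b \<notin> A) \<or> (a \<notin> A \<and> b \<in> A))"
        using Cons.IH by blast
      then show ?thesis by (metis append_Cons)
    qed
  qed
qed

lemma rstepI: "(u, v) \<in> V \<Longrightarrow> (w1 @ u @ w2, w1 @ v @ w2) \<in> rstep V"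
  unfolding rstep_def by blast

theorem lemma3p1:
  fixes T :: "'a::semigroup_mult set"
    and A B :: "'l set"
    and R Q :: "('l list \<times> 'l list) set"
    and \<phi> :: "'l \<Rightarrow> 'a" and \<psi> :: "'l \<Rightarrow> 'a option"
    and \<rho> :: "'l list \<Rightarrow> 'l list" and \<sigma> \<pi> :: "'l \<Rightarrow> 'l \<Rightarrow> 'l list"
    and B0 :: "'l set" and Q0 :: "('l list \<times> 'l list) set"
    and \<theta> :: "'l \<Rightarrow> 'a" and V :: "('l list \<times> 'l list) set"
  assumes ideal: "semigroup_ideal T"
    and presT: "finite_complete_presentation (*) T \<phi> A R"
    and presU: "finite_complete_presentation (rees_mult T) (rees_carrier T) \<psi> B Q"
    and disj: "A \<inter> B = {}"
    and B0_def: "B0 = {b \<in> B. \<psi> b = None}"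
    and Q0_def: "Q0 = {(u, v) \<in> Q. weval (rees_mult T) \<psi> u = None}"
    and zero_letter: "\<exists>z \<in> B0. \<forall>w \<in> wplus B.
          (weval (rees_mult T) \<psi> w = None \<and> irreducible_word Q w) \<longleftrightarrow> w = [z]"
    and \<theta>_def: "\<theta> = (\<lambda>l. if l \<in> A then \<phi> l else the (\<psi> l))"
    and \<rho>: "\<And>u. u \<in> wplus (B - B0) \<Longrightarrow> weval (rees_mult T) \<psi> u = None \<Longrightarrow>
              \<rho> u \<in> wplus A \<and> weval (*) \<theta> (\<rho> u) = weval (*) \<theta> u"
    and \<sigma>: "\<And>a b. a \<in> A \<Longrightarrow> b \<in> B - B0 \<Longrightarrow>
              \<sigma> a b \<in> wplus A \<and> weval (*) \<theta> (\<sigma> a b) = \<theta> a * \<theta> b"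
    and \<pi>: "\<And>a b. a \<in> A \<Longrightarrow> b \<in> B - B0 \<Longrightarrow>
              \<pi> b a \<in> wplus A \<and> weval (*) \<theta> (\<pi> b a) = \<theta> b * \<theta> a"
    and V_def: "V = R \<union> (Q - Q0)
          \<union> {(u, \<rho> u) | u. u \<in> wplus (B - B0) \<and> (\<exists>v. (u, v) \<in> Q0 \<or> (v, u) \<in> Q0)}
          \<union> {([a, b], \<sigma> a b) | a b. a \<in> A \<and> b \<in> B - B0}
          \<union> {([b, a], \<pi> b a) | a b. a \<in> A \<and> b \<in> B - B0}"
  shows "\<forall>w \<in> wplus (A \<union> (B - B0)).
           (weval (*) \<theta> w \<in> T \<longrightarrow> (\<exists>w' \<in> wplus A. (w, w') \<in> (rstep V)\<^sup>*)) \<and>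
           (weval (*) \<theta> w \<notin> T \<longrightarrow> w \<in> wplus (B - B0))"
proof -
  let ?ev = "weval (rees_mult T) \<psi>"
  let ?th = "weval (*) \<theta>"
  have Qsub: "Q \<subseteq> wplus B \<times> wplus B" and evB: "?ev ` wplus B = rees_carrier T"
    and kerQ: "\<And>u v. u \<in> wplus B \<Longrightarrow> v \<in> wplus B \<Longrightarrow> ?ev u = ?ev v \<longleftrightarrow> (u, v) \<in> rconv Q"
    and noeQ: "noetherian_on B Q"
    using presU unfolding finite_complete_presentation_def is_presentation_def complete_on_def by blast+
  have evT: "weval (*) \<phi> ` wplus A = T"
    using presT unfolding finite_complete_presentation_def is_presentation_def by blast
  have thA: "\<theta> a \<in> T" if "a \<in> A" for a
  proof -
    have "[a] \<in> wplus A" using that unfolding wplus_def by auto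
    then have "weval (*) \<phi> [a] \<in> T" using evT by blast
    then show ?thesis using that \<theta>_def by simp
  qed
  have psiB: "\<psi> b = Some (\<theta> b) \<and> \<theta> b \<notin> T" if "b \<in> B - B0" for b
  proof -
    have "[b] \<in> wplus B" using that unfolding wplus_def by auto
    then have "\<psi> b \<in> rees_carrier T" using evB by (metis image_eqI weval_single)
    moreover have "\<psi> b \<noteq> None" using that B0_def by auto
    moreover have "b \<notin> A" using that disj by auto
    ultimately show ?thesis using \<theta>_def unfolding rees_carrier_def by auto
  qed
  have ideal': "\<And>s t. t \<in> T \<Longrightarrow> s * t \<in> T \<and> t * s \<in> T" using ideal unfolding semigroup_ideal_def by blast
  have Rchar: "w \<in> lists B \<Longrightarrow> w \<noteq> [] \<Longrightarrow> ?ev w = (if set w \<subseteq> B - B0 \<and> ?th w \<notin> T then Some (?th w) else None)" for w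
  proof (induction w rule: rev_induct)
    case Nil then show ?case by simp
  next
    case (snoc x w)
    have xB: "x \<in> B" using snoc by auto
    show ?case
    proof (cases "w = []")
      case True
      show ?thesis
      proof (cases "x \<in> B0")
        case True then show ?thesis using \<open>w = []\<close> B0_def by auto
      next
        case False then show ?thesis using \<open>w = []\<close> psiB xB by auto
      qed
    next
      case False
      have IH: "?ev w = (if set w \<subseteq> B - B0 \<and> ?th w \<notin> T then Some (?th w) else None)"
        using snoc False by auto
      have e1: "?ev (w @ [x]) = rees_mult T (?ev w) (\<psi> x)" using False by (rule weval_snoc)
      have e2: "?th (w @ [x]) = ?th w * \<theta> x" using False by (rule weval_snoc)
      show ?thesis
      proof (cases "set w \<subseteq> B - B0 \<and> ?th w \<notin> T")
        case True
        show ?thesis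
        proof (cases "x \<in> B0")
          case True then show ?thesis using e1 IH B0_def unfolding rees_mult_def by auto
        next
          case False
          then have "\<psi> x = Some (\<theta> x)" using psiB xB by auto
          then show ?thesis using True False xB e1 e2 IH unfolding rees_mult_def by auto
        qed
      next
        case nt: False
        have "?ev (w @ [x]) = None" using e1 IH nt unfolding rees_mult_def by auto
        moreover have "\<not> (set (w @ [x]) \<subseteq> B - B0 \<and> ?th (w @ [x]) \<notin> T)"
          using nt e2 ideal' by auto
        ultimately show ?thesis by simp
      qed
    qed
  qed
  have Vsig: "([a,b], \<sigma> a b) \<in> V" if "a \<in> A" "b \<in> B - B0" for a b
    using that unfolding V_def by blast
  have Vpi: "([b,a], \<pi> b a) \<in> V" if "a \<in> A" "b \<in> B - B0" for a b
    using that unfolding V_def by blast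
  have Vrho: "(u, \<rho> u) \<in> V" if "u \<in> wplus (B - B0)" "(u, v) \<in> Q0" for u v
    using that unfolding V_def by blast
  have VQ: "(u, v) \<in> V" if "(u, v) \<in> Q - Q0" for u v
    using that unfolding V_def by blast
  have absorb: "\<And>w. length (filter (\<lambda>x. x \<notin> A) w) = n \<Longrightarrow> w \<in> lists (A \<union> (B - B0)) \<Longrightarrow>
      set w \<inter> A \<noteq> {} \<Longrightarrow> \<exists>w' \<in> wplus A. (w, w') \<in> (rstep V)\<^sup>*" for n
  proof (induction n rule: less_induct)
    case (less n w)
    show ?case
    proof (cases "set w \<subseteq> A")
      case True
      then have "w \<in> wplus A" using less.prems unfolding wplus_def by auto
      then show ?thesis by blast
    next
      case False
      obtain xs a b ys where w: "w = xs @ [a,b] @ ys" and ab: "(a \<in> A \<and> b \<notin> A) \<or> (a \<notin> A \<and> b \<in> A)"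
        using adjacent[OF less.prems(3) False] by blast
      obtain s where rule: "([a,b], s) \<in> V" and sA: "s \<in> wplus A"
      proof (cases "a \<in> A \<and> b \<notin> A")
        case True
        then have "b \<in> B - B0" using less.prems w by auto
        then show ?thesis using that[of "\<sigma> a b"] \<sigma>[of a b] True Vsig by blast
      next
        case False
        then have "a \<in> B - B0" "b \<in> A" using less.prems w ab by auto
        then show ?thesis using that[of "\<pi> a b"] \<pi>[of b a] Vpi by blast
      qed
      have sA': "set s \<subseteq> A" "s \<noteq> []" using sA unfolding wplus_def by auto
      have step: "(w, xs @ s @ ys) \<in> rstep V" using w rstepI[OF rule] by simp
      have cnt: "length (filter (\<lambda>x. x \<notin> A) (xs @ s @ ys)) < n"
      proof -
        have "filter (\<lambda>x. x \<notin> A) s = []" using sA' by (simp add: filter_empty_conv subset_iff)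
        then show ?thesis using less.prems(1) w ab by auto
      qed
      have "xs @ s @ ys \<in> lists (A \<union> (B - B0))" using less.prems(2) w sA' by auto
      moreover have "set (xs @ s @ ys) \<inter> A \<noteq> {}" using sA' by (cases s) auto
      ultimately obtain w' where "w' \<in> wplus A" "(xs @ s @ ys, w') \<in> (rstep V)\<^sup>*"
        using less.IH[OF cnt refl] by blast
      then show ?thesis using step by (meson converse_rtrancl_into_rtrancl)
    qed
  qed
  define r where "r = {(y, x). x \<in> lists B \<and> (x, y) \<in> rstep Q}"
  have wfr: "wf r"
  proof (rule ccontr)
    assume "\<not> wf r"
    then obtain f where f: "\<And>i. (f (Suc i), f i) \<in> r" using wf_iff_no_infinite_down_chain by blast
    then have "f 0 \<in> lists B \<and> (\<forall>i. (f i, f (Suc i)) \<in> rstep Q)" unfolding r_def by blast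
    then show False using noeQ unfolding noetherian_on_def by blast
  qed
  obtain z where zB0: "z \<in> B0" and zprop: "\<And>w. w \<in> wplus B \<Longrightarrow>
      (?ev w = None \<and> irreducible_word Q w) \<longleftrightarrow> w = [z]" using zero_letter by blast
  have Bcase: "w \<in> wplus (B - B0) \<longrightarrow> ?th w \<in> T \<longrightarrow> (\<exists>w' \<in> wplus A. (w, w') \<in> (rstep V)\<^sup>*)" for w
  proof (induction w rule: wf_induct_rule[OF wfr])
    case (1 w)
    show ?case
    proof (intro impI)
      assume wB: "w \<in> wplus (B - B0)" and wT: "?th w \<in> T"
      have wB': "w \<in> wplus B" "w \<in> lists B" "w \<noteq> []" "set w \<subseteq> B - B0" using wB unfolding wplus_def by auto
      have ev0: "?ev w = None" using Rchar[OF wB'(2,3)] wT by simp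
      have "w \<noteq> [z]" using zB0 wB'(4) by auto
      then have "\<not> irreducible_word Q w" using zprop[OF wB'(1)] ev0 by blast
      then obtain w1 u v w2 where w: "w = w1 @ u @ w2" and uv: "(u, v) \<in> Q" and wn: "(w, w1 @ v @ w2) \<in> rstep Q"
        unfolding irreducible_word_def rstep_def by blast
      have uvB: "u \<in> wplus B" "v \<in> wplus B" using uv Qsub by auto
      show "\<exists>w' \<in> wplus A. (w, w') \<in> (rstep V)\<^sup>*"
      proof (cases "?ev u = None")
        case True
        have u1: "u \<in> wplus (B - B0)" using uvB wB'(4) w unfolding wplus_def by auto
        have "(u, v) \<in> Q0" using True uv Q0_def by auto
        then have rule: "(u, \<rho> u) \<in> V" using u1 Vrho by blast
        have ru: "\<rho> u \<in> wplus A" using \<rho>[OF u1 True] by blast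
        then have ru': "set (\<rho> u) \<subseteq> A" "\<rho> u \<noteq> []" unfolding wplus_def by auto
        have step: "(w, w1 @ \<rho> u @ w2) \<in> rstep V" using w rstepI[OF rule] by simp
        have "w1 @ \<rho> u @ w2 \<in> lists (A \<union> (B - B0))" using ru' wB'(4) w by auto
        moreover have "set (w1 @ \<rho> u @ w2) \<inter> A \<noteq> {}" using ru' by (cases "\<rho> u") auto
        ultimately obtain w' where "w' \<in> wplus A" "(w1 @ \<rho> u @ w2, w') \<in> (rstep V)\<^sup>*"
          using absorb[OF refl] by blast
        then show ?thesis using step by (meson converse_rtrancl_into_rtrancl)
      next
        case False
        have "(u, v) \<in> Q - Q0" using False uv Q0_def by auto
        then have rule: "(u, v) \<in> V" using VQ by blast
        have "(u, v) \<in> rconv Q" using rstepI[OF uv, of "[]" "[]"] unfolding rconv_def by auto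
        then have evuv: "?ev u = ?ev v" using kerQ uvB by blast
        have vl: "v \<in> lists B" "v \<noteq> []" using uvB unfolding wplus_def by auto
        have vB0: "set v \<subseteq> B - B0" using Rchar[OF vl] False evuv by (auto split: if_splits)
        let ?w2 = "w1 @ v @ w2"
        have w2B: "?w2 \<in> wplus (B - B0)" using vB0 vl wB'(4) w unfolding wplus_def by auto
        have "(w, ?w2) \<in> rconv Q" using wn unfolding rconv_def by auto
        moreover have "?w2 \<in> wplus B" using w2B unfolding wplus_def by auto
        ultimately have "?ev ?w2 = None" using kerQ wB'(1) ev0 by metis
        moreover have "?w2 \<in> lists B" "?w2 \<noteq> []" using w2B unfolding wplus_def by auto
        ultimately have w2T: "?th ?w2 \<in> T" using Rchar[of ?w2] w2B unfolding wplus_def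
          by (auto split: if_splits)
        have "(?w2, w) \<in> r" using wn wB'(2) unfolding r_def by auto
        then obtain w' where "w' \<in> wplus A" "(?w2, w') \<in> (rstep V)\<^sup>*" using 1 w2B w2T by blast
        moreover have "(w, ?w2) \<in> rstep V" using w rstepI[OF rule] by simp
        ultimately show ?thesis by (meson converse_rtrancl_into_rtrancl)
      qed
    qed
  qed
  show ?thesis
  proof
    fix w assume w: "w \<in> wplus (A \<union> (B - B0))"
    show "(?th w \<in> T \<longrightarrow> (\<exists>w' \<in> wplus A. (w, w') \<in> (rstep V)\<^sup>*)) \<and> (?th w \<notin> T \<longrightarrow> w \<in> wplus (B - B0))"
    proof (cases "set w \<inter> A = {}")
      case True
      then have "w \<in> wplus (B - B0)" using w unfolding wplus_def by auto
      then show ?thesis using Bcase by blast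
    next
      case False
      then obtain a where "a \<in> set w" "a \<in> A" by blast
      then have "?th w \<in> T" by (meson ideal_mem[OF ideal] thA)
      moreover have "w \<in> lists (A \<union> (B - B0))" using w unfolding wplus_def by simp
      moreover have "\<exists>w' \<in> wplus A. (w, w') \<in> (rstep V)\<^sup>*"
        using absorb[OF refl calculation(2) False] .
      ultimately show ?thesis by blast
    qed
  qed
qed

end
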